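(* Let $f$ be a derivation of a commutator semi-lattice $(X,\leq,\cdot)$. Then for all $a,b\in X$ and every non-negative integer $n$, $$f^n(a\cdot b)\leq \bigvee_{i=0}^n f^i(a)\cdot f^{n-i}(b),$$ where $f^0$ denotes the identity map.
   Context: A join semi-lattice is a poset $(X,\leq)$ with a binary operation $\vee$ that is idempotent, commutative and associative, such that $a\leq b \iff a\vee b=b$ for all $a,b\in X$. A commutator semi-lattice is a triple $(X,\leq,\cdot)$ where $(X,\leq,\vee)$ is a join semi-lattice and $\cdot$ is a binary operation on $X$ such that: $\cdot$ is commutative; $a\cdot b\leq b$ for all $a,b$; and $a\cdot(b\vee c)=(a\cdot b)\vee(a\cdot c)$ for all $a,b,c$. A derivation of a commutator semi-lattice is a map $f:X\to X$ preserving joins ($f(a\vee b)=f(a)\vee f(b)$) and satisfying $f(a\cdot b)\leq (f(a)\cdot b)\vee(a\cdot f(b))$ for all $a,b\in X$. *)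

theory Defs
  imports Main
begin

definition commutator_semilattice :: "('a::semilattice_sup \<Rightarrow> 'a \<Rightarrow> 'a) \<Rightarrow> bool" where
  "commutator_semilattice mult \<longleftrightarrow>
     (\<forall>a b. mult a b = mult b a) \<and>
     (\<forall>a b. mult a b \<le> b) \<and>
     (\<forall>a b c. mult a (sup b c) = sup (mult a b) (mult a c))"

definition derivation :: "('a::semilattice_sup \<Rightarrow> 'a \<Rightarrow> 'a) \<Rightarrow> ('a \<Rightarrow> 'a) \<Rightarrow> bool" where
  "derivation mult f \<longleftrightarrow>
     (\<forall>a b. f (sup a b) = sup (f a) (f b)) \<and>
     (\<forall>a b. f (mult a b) \<le> sup (mult (f a) b) (mult a (f b)))"

fun join_upto :: "(nat \<Rightarrow> 'a::semilattice_sup) \<Rightarrow> nat \<Rightarrow> 'a" where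
  "join_upto g 0 = g 0"
| "join_upto g (Suc n) = sup (join_upto g n) (g (Suc n))"

end

theory Submission
  imports Defs
begin

lemma join_upto_le_iff: "join_upto g n \<le> c \<longleftrightarrow> (\<forall>i\<le>n. g i \<le> c)"
  by (induction n) (auto simp: le_Suc_eq)

lemma join_upto_ge: "i \<le> n \<Longrightarrow> g i \<le> join_upto g n"
  by (induction n) (auto simp: le_Suc_eq intro: le_supI1)

lemma join_upto_map:
  assumes "\<And>x y. f (sup x y) = sup (f x) (f y)"
  shows "f (join_upto g n) = join_upto (\<lambda>i. f (g i)) n"
  by (induction n) (simp_all add: assms)

theorem proposition2p9:
  fixes mult :: "'a::semilattice_sup \<Rightarrow> 'a \<Rightarrow> 'a" and f :: "'a \<Rightarrow> 'a"
  assumes "commutator_semilattice mult"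
    and "derivation mult f"
  shows "\<forall>a b. \<forall>n::nat. (f ^^ n) (mult a b) \<le> join_upto (\<lambda>i. mult ((f ^^ i) a) ((f ^^ (n - i)) b)) n"
proof (intro allI)
  fix a b and n :: nat
  have fs: "\<And>x y. f (sup x y) = sup (f x) (f y)" and fd: "\<And>x y. f (mult x y) \<le> sup (mult (f x) y) (mult x (f y))"
    using assms(2) unfolding derivation_def by auto
  have fm: "\<And>x y. x \<le> y \<Longrightarrow> f x \<le> f y"
    by (metis fs le_iff_sup)
  show "(f ^^ n) (mult a b) \<le> join_upto (\<lambda>i. mult ((f ^^ i) a) ((f ^^ (n - i)) b)) n"
  proof (induction n)
    case 0
    then show ?case by simp
  next
    case (Suc n)
    let ?J = "join_upto (\<lambda>i. mult ((f ^^ i) a) ((f ^^ (Suc n - i)) b)) (Suc n)"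
    have "(f ^^ Suc n) (mult a b) = f ((f ^^ n) (mult a b))" by simp
    also have "\<dots> \<le> f (join_upto (\<lambda>i. mult ((f ^^ i) a) ((f ^^ (n - i)) b)) n)"
      using Suc fm by blast
    also have "\<dots> = join_upto (\<lambda>i. f (mult ((f ^^ i) a) ((f ^^ (n - i)) b))) n"
      by (rule join_upto_map[OF fs])
    also have "\<dots> \<le> ?J"
      unfolding join_upto_le_iff
    proof (intro allI impI)
      fix i assume i: "i \<le> n"
      have t1: "mult ((f ^^ Suc i) a) ((f ^^ (n - i)) b) \<le> ?J"
        using join_upto_ge[of "Suc i" "Suc n" "\<lambda>i. mult ((f ^^ i) a) ((f ^^ (Suc n - i)) b)"] i by simp
      have e: "Suc n - i = Suc (n - i)" using i by simp
      have t2: "mult ((f ^^ i) a) ((f ^^ Suc (n - i)) b) \<le> ?J"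
        using join_upto_ge[of i "Suc n" "\<lambda>i. mult ((f ^^ i) a) ((f ^^ (Suc n - i)) b)"] i e by simp
      show "f (mult ((f ^^ i) a) ((f ^^ (n - i)) b)) \<le> ?J"
        using fd[of "(f ^^ i) a" "(f ^^ (n - i)) b"] t1 t2 by (simp add: order_trans)
    qed
    finally show ?case .
  qed
qed

end
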